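(* Let $L>1$ be a real number that is not an integer and let $T>0$. The following are equivalent: (i) there exists a continuous function $f:[0,T]\to\mathbb{R}$ with $f(0)=0$ and $f(T)=L$ such that there are no $s,t\in[0,T]$ with $t-s=T/L$ and $f(t)-f(s)=1$; (ii) there exists a continuous function $g:[0,L]\to\mathbb{R}$ with $g(0)=g(L)=0$ such that there is no $x\in[0,L-1]$ with $g(x)=g(x+1)$.
   Context: Statement (i) expresses that a race of length $L$ completed in time $T$ has a position function with no one-unit portion covered at exactly the average pace; statement (ii) expresses that some function on $[0,L]$ vanishing at both endpoints has no horizontal chord of length $1$. *)

theory Defs
  imports "HOL-Analysis.Analysis"
begin

end

theory Submission
  imports Defs
begin

theorem lemma1:
  fixes L T :: real
  assumes "L > 1" and "L \<notin> \<int>" and "T > 0"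
  shows "(\<exists>f :: real \<Rightarrow> real. continuous_on {0..T} f \<and> f 0 = 0 \<and> f T = L \<and>
            \<not> (\<exists>s\<in>{0..T}. \<exists>t\<in>{0..T}. t - s = T / L \<and> f t - f s = 1))
     \<longleftrightarrow>
         (\<exists>g :: real \<Rightarrow> real. continuous_on {0..L} g \<and> g 0 = 0 \<and> g L = 0 \<and>
            \<not> (\<exists>x\<in>{0..L-1}. g x = g (x + 1)))"
proof
  assume "\<exists>f :: real \<Rightarrow> real. continuous_on {0..T} f \<and> f 0 = 0 \<and> f T = L \<and>
            \<not> (\<exists>s\<in>{0..T}. \<exists>t\<in>{0..T}. t - s = T / L \<and> f t - f s = 1)"
  then obtain f :: "real \<Rightarrow> real" where fc: "continuous_on {0..T} f" and f0: "f 0 = 0" and fT: "f T = L"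
    and fn: "\<not> (\<exists>s\<in>{0..T}. \<exists>t\<in>{0..T}. t - s = T / L \<and> f t - f s = 1)" by blast
  define g where "g x = x - f (x * T / L)" for x
  have L0: "L > 0" using assms by simp
  have "continuous_on {0..L} g"
    unfolding g_def
  proof (intro continuous_intros)
    have "(\<lambda>x. x * T / L) ` {0..L} \<subseteq> {0..T}"
      using L0 assms(3) by (auto simp: field_simps intro!: mult_nonneg_nonneg divide_nonneg_pos)
    then show "continuous_on {0..L} (\<lambda>x. f (x * T / L))"
      by (intro continuous_on_compose2[OF fc]) (use L0 assms(3) in \<open>auto intro!: continuous_intros\<close>)
  qed
  moreover have "g 0 = 0" using f0 by (simp add: g_def)
  moreover have "g L = 0" using fT L0 by (simp add: g_def)
  moreover have "\<not> (\<exists>x\<in>{0..L-1}. g x = g (x + 1))"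
  proof
    assume "\<exists>x\<in>{0..L-1}. g x = g (x + 1)"
    then obtain x where x: "0 \<le> x" "x \<le> L - 1" "g x = g (x + 1)" by auto
    define s where "s = x * T / L"
    define t where "t = (x + 1) * T / L"
    have "s \<in> {0..T}" using x L0 assms(3) by (auto simp: s_def field_simps)
    moreover have "t \<in> {0..T}"
    proof -
      have "T * (x + 1) \<le> T * L" using x assms(3) by (intro mult_left_mono) auto
      then show ?thesis using x L0 assms(3) by (auto simp: t_def field_simps)
    qed
    moreover have "t - s = T / L" by (simp add: s_def t_def add_divide_distrib diff_divide_distrib algebra_simps)
    moreover have "f t - f s = 1" using x(3) by (simp add: g_def s_def t_def)
    ultimately show False using fn by blast
  qed
  ultimately show "\<exists>g :: real \<Rightarrow> real. continuous_on {0..L} g \<and> g 0 = 0 \<and> g L = 0 \<and>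
            \<not> (\<exists>x\<in>{0..L-1}. g x = g (x + 1))" by auto
next
  assume "\<exists>g :: real \<Rightarrow> real. continuous_on {0..L} g \<and> g 0 = 0 \<and> g L = 0 \<and>
            \<not> (\<exists>x\<in>{0..L-1}. g x = g (x + 1))"
  then obtain g :: "real \<Rightarrow> real" where gc: "continuous_on {0..L} g" and g0: "g 0 = 0" and gL: "g L = 0"
    and gn: "\<not> (\<exists>x\<in>{0..L-1}. g x = g (x + 1))" by auto
  define f where "f t = t * L / T - g (t * L / T)" for t
  have L0: "L > 0" using assms by simp
  have "continuous_on {0..T} f"
    unfolding f_def
  proof (intro continuous_intros)
    have "(\<lambda>t. t * L / T) ` {0..T} \<subseteq> {0..L}"
      using L0 assms(3) by (auto simp: field_simps intro!: mult_nonneg_nonneg divide_nonneg_pos)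
    then show "continuous_on {0..T} (\<lambda>t. g (t * L / T))"
      by (intro continuous_on_compose2[OF gc]) (use L0 assms(3) in \<open>auto intro!: continuous_intros\<close>)
  qed (use assms(3) in auto)
  moreover have "f 0 = 0" using g0 by (simp add: f_def)
  moreover have "f T = L" using gL assms(3) by (simp add: f_def)
  moreover have "\<not> (\<exists>s\<in>{0..T}. \<exists>t\<in>{0..T}. t - s = T / L \<and> f t - f s = 1)"
  proof
    assume "\<exists>s\<in>{0..T}. \<exists>t\<in>{0..T}. t - s = T / L \<and> f t - f s = 1"
    then obtain s t where st: "0 \<le> s" "t \<le> T" "t - s = T / L" "f t - f s = 1" by auto
    define x where "x = s * L / T"
    have tx: "t * L / T = x + 1" using st(3) L0 assms(3)
      by (simp add: x_def field_simps)
    have "x \<ge> 0" using st L0 assms(3) by (simp add: x_def)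
    moreover have "x \<le> L - 1"
    proof -
      have "t * L / T \<le> L" using st(2) L0 assms(3) by (simp add: field_simps)
      then show ?thesis using tx by simp
    qed
    moreover have "g x = g (x + 1)" using st(4) tx by (simp add: f_def x_def[symmetric])
    ultimately show False using gn by auto
  qed
  ultimately show "\<exists>f :: real \<Rightarrow> real. continuous_on {0..T} f \<and> f 0 = 0 \<and> f T = L \<and>
            \<not> (\<exists>s\<in>{0..T}. \<exists>t\<in>{0..T}. t - s = T / L \<and> f t - f s = 1)" by (intro exI[of _ f]) blast
qed

end
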